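(* Let $\mathcal{D}$ be a finite set of $N\ge 2$ distinct real numbers, all in $[a,b]$, and let $0<\delta<1$. Suppose $\mathrm{LB}$ and $\mathrm{RB}$ are range-based lower and upper confidence bounders with the following validity property: for every finite set $\mathcal{D}'$ of reals contained in an interval $[a',b']$, every $k\ge 1$ with $k\le|\mathcal{D}'|$, and every $\delta'\in(0,1)$, if $T$ is a uniform without-replacement sample of size $k$ from $\mathcal{D}'$, then $\Pr[\mathrm{LB}(T,a',b',\delta') > \mathrm{AVG}(\mathcal{D}')] < \delta'$ and $\Pr[\mathrm{RB}(T,a',b',\delta') < \mathrm{AVG}(\mathcal{D}')] < \delta'$. Let $2 \le m \le N$ and let $S$ be a uniform without-replacement sample of size $m$ from $\mathcal{D}$. Define $$g_\ell = \mathrm{LB}\big(S\setminus\{\max S\},\, a,\, \max S,\, \delta/2\big),\qquad g_r = \mathrm{RB}\big(S\setminus\{\min S\},\, \min S,\, b,\, \delta/2\big).$$ Then $\Pr\big[\mathrm{AVG}(\mathcal{D}) \notin [g_\ell, g_r]\big] < \delta$. In particular $g_\ell$ does not depend on $b$ and $g_r$ does not depend on $a$.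
   Context: $\mathrm{AVG}(\mathcal{D})$ is the arithmetic mean of the elements of $\mathcal{D}$. For $x\in\mathbb{R}$, write $\mathcal{D}_{<x}=\mathcal{D}\cap(-\infty,x)$ and $\mathcal{D}_{>x}=\mathcal{D}\cap(x,\infty)$. A uniform without-replacement sample of size $k$ from a finite set is a uniformly random $k$-element subset (equivalently the first $k$ entries of a uniformly random ordering). *)

theory Defs
  imports "HOL-Probability.Probability"
begin

definition AVG :: "real set \<Rightarrow> real" where
  "AVG D = (\<Sum>x\<in>D. x) / real (card D)"

definition sample_wor :: "'a set \<Rightarrow> nat \<Rightarrow> 'a set pmf" where
  "sample_wor D k = pmf_of_set {T. T \<subseteq> D \<and> card T = k}"

definition valid_LB :: "(real set \<Rightarrow> real \<Rightarrow> real \<Rightarrow> real \<Rightarrow> real) \<Rightarrow> bool" where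
  "valid_LB LB \<longleftrightarrow> (\<forall>D' a' b' k \<delta>'. finite D' \<and> D' \<subseteq> {a'..b'} \<and> 1 \<le> k \<and> k \<le> card D'
      \<and> 0 < \<delta>' \<and> \<delta>' < 1 \<longrightarrow>
      measure_pmf.prob (sample_wor D' k) {T. LB T a' b' \<delta>' > AVG D'} < \<delta>')"

definition valid_RB :: "(real set \<Rightarrow> real \<Rightarrow> real \<Rightarrow> real \<Rightarrow> real) \<Rightarrow> bool" where
  "valid_RB RB \<longleftrightarrow> (\<forall>D' a' b' k \<delta>'. finite D' \<and> D' \<subseteq> {a'..b'} \<and> 1 \<le> k \<and> k \<le> card D'
      \<and> 0 < \<delta>' \<and> \<delta>' < 1 \<longrightarrow>
      measure_pmf.prob (sample_wor D' k) {T. RB T a' b' \<delta>' < AVG D'} < \<delta>')"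

end

theory Submission
  imports Defs
begin

lemma prob_sample_wor:
  assumes "finite D" "k \<le> card D"
  shows "measure_pmf.prob (sample_wor D k) E =
     real (card {T. T \<subseteq> D \<and> card T = k \<and> T \<in> E}) / real (card {T. T \<subseteq> D \<and> card T = k})"
proof -
  have fin: "finite {T. T \<subseteq> D \<and> card T = k}" using assms(1) by auto
  have ne: "{T. T \<subseteq> D \<and> card T = k} \<noteq> {}"
    using obtain_subset_with_card_n[OF assms(2)] by blast
  show ?thesis unfolding sample_wor_def
    by (subst measure_pmf_of_set[OF ne fin]) (simp add: Int_def conj_assoc)
qed

lemma avg_lower:
  fixes D :: "real set"
  assumes "finite D" "{y\<in>D. y < x} \<noteq> {}"
  shows "AVG {y\<in>D. y < x} \<le> AVG D"
proof -
  define A where "A = {y\<in>D. y < x}"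
  define B where "B = {y\<in>D. \<not> y < x}"
  have fA: "finite A" and fB: "finite B" using assms(1) by (auto simp: A_def B_def)
  have D: "D = A \<union> B" and dis: "A \<inter> B = {}" by (auto simp: A_def B_def)
  have cA: "card A > 0" using assms fA by (auto simp: A_def card_gt_0_iff)
  have sD: "sum id D = sum id A + sum id B" using D dis fA fB sum.union_disjoint by metis
  have cD: "card D = card A + card B" using D dis fA fB card_Un_disjoint by metis
  have sA: "sum id A \<le> real (card A) * x"
    using sum_mono[of A id "\<lambda>_. x"] by (auto simp: A_def)
  have sB: "real (card B) * x \<le> sum id B"
    using sum_mono[of B "\<lambda>_. x" id] by (auto simp: B_def)
  have "sum id A * real (card B) \<le> real (card A) * x * real (card B)"
    using sA by (simp add: mult_right_mono)
  also have "\<dots> \<le> real (card A) * sum id B"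
    using sB by (metis mult.assoc mult.commute mult_left_mono of_nat_0_le_iff)
  finally have key: "sum id A * real (card B) \<le> real (card A) * sum id B" .
  have "sum id A / real (card A) \<le> (sum id A + sum id B) / (real (card A) + real (card B))"
    using cA key by (simp add: divide_simps algebra_simps)
  thus ?thesis unfolding AVG_def A_def[symmetric] using sD cD by simp
qed

lemma avg_upper:
  fixes D :: "real set"
  assumes "finite D" "{y\<in>D. x < y} \<noteq> {}"
  shows "AVG D \<le> AVG {y\<in>D. x < y}"
proof -
  define A where "A = {y\<in>D. x < y}"
  define B where "B = {y\<in>D. \<not> x < y}"
  have fA: "finite A" and fB: "finite B" using assms(1) by (auto simp: A_def B_def)
  have D: "D = A \<union> B" and dis: "A \<inter> B = {}" by (auto simp: A_def B_def)
  have cA: "card A > 0" using assms fA by (auto simp: A_def card_gt_0_iff)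
  have sD: "sum id D = sum id A + sum id B" using D dis fA fB sum.union_disjoint by metis
  have cD: "card D = card A + card B" using D dis fA fB card_Un_disjoint by metis
  have sA: "real (card A) * x \<le> sum id A"
    using sum_mono[of A "\<lambda>_. x" id] by (auto simp: A_def)
  have sB: "sum id B \<le> real (card B) * x"
    using sum_mono[of B id "\<lambda>_. x"] by (auto simp: B_def)
  have "real (card A) * sum id B \<le> real (card A) * (real (card B) * x)"
    using sB by (simp add: mult_left_mono)
  also have "\<dots> \<le> sum id A * real (card B)"
    using sA by (metis mult.assoc mult.commute mult_left_mono of_nat_0_le_iff)
  finally have key: "real (card A) * sum id B \<le> sum id A * real (card B)" .
  have "(sum id A + sum id B) / (real (card A) + real (card B)) \<le> sum id A / real (card A)"
    using cA key by (simp add: divide_simps algebra_simps)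
  thus ?thesis unfolding AVG_def A_def[symmetric] using sD cD by simp
qed


lemma fiber_max:
  fixes D :: "real set"
  assumes "finite D" "x \<in> D" "1 \<le> m"
  shows "{S. S \<subseteq> D \<and> card S = m \<and> Max S = x \<and> Q S} =
    insert x ` {T. T \<subseteq> {y\<in>D. y < x} \<and> card T = m - 1 \<and> Q (insert x T)}"
proof (rule set_eqI, rule iffI)
  fix S assume S: "S \<in> {S. S \<subseteq> D \<and> card S = m \<and> Max S = x \<and> Q S}"
  hence fS: "finite S" using assms(1) finite_subset by blast
  have ne: "S \<noteq> {}" using S assms(3) by auto
  have xS: "x \<in> S" using S Max_in[OF fS ne] by auto
  have "S - {x} \<subseteq> {y\<in>D. y < x}"
    using S Max_ge[OF fS] by fastforce
  moreover have "card (S - {x}) = m - 1" using S xS fS by auto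
  moreover have "insert x (S - {x}) = S" using xS by auto
  ultimately show "S \<in> insert x ` {T. T \<subseteq> {y\<in>D. y < x} \<and> card T = m - 1 \<and> Q (insert x T)}"
    using S by (metis (mono_tags, lifting) image_eqI mem_Collect_eq)
next
  fix S assume "S \<in> insert x ` {T. T \<subseteq> {y\<in>D. y < x} \<and> card T = m - 1 \<and> Q (insert x T)}"
  then obtain T where T: "T \<subseteq> {y\<in>D. y < x}" "card T = m - 1" "Q (insert x T)" and S: "S = insert x T"
    by auto
  have fT: "finite T" using T(1) assms(1) finite_subset by (metis (no_types, lifting) mem_Collect_eq subsetI subset_iff finite_Collect_conjI)
  have xT: "x \<notin> T" using T(1) by auto
  have "card S = m" using S fT xT T(2) assms(3) by simp
  moreover have "Max S = x" using S fT T(1) by (auto intro!: Max_eqI)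
  moreover have "S \<subseteq> D" using S T(1) assms(2) by auto
  ultimately show "S \<in> {S. S \<subseteq> D \<and> card S = m \<and> Max S = x \<and> Q S}" using T(3) S by auto
qed

lemma fiber_min:
  fixes D :: "real set"
  assumes "finite D" "x \<in> D" "1 \<le> m"
  shows "{S. S \<subseteq> D \<and> card S = m \<and> Min S = x \<and> Q S} =
    insert x ` {T. T \<subseteq> {y\<in>D. x < y} \<and> card T = m - 1 \<and> Q (insert x T)}"
proof (rule set_eqI, rule iffI)
  fix S assume S: "S \<in> {S. S \<subseteq> D \<and> card S = m \<and> Min S = x \<and> Q S}"
  hence fS: "finite S" using assms(1) finite_subset by blast
  have ne: "S \<noteq> {}" using S assms(3) by auto
  have xS: "x \<in> S" using S Min_in[OF fS ne] by auto
  have "S - {x} \<subseteq> {y\<in>D. x < y}"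
    using S Min_le[OF fS] by fastforce
  moreover have "card (S - {x}) = m - 1" using S xS fS by auto
  moreover have "insert x (S - {x}) = S" using xS by auto
  ultimately show "S \<in> insert x ` {T. T \<subseteq> {y\<in>D. x < y} \<and> card T = m - 1 \<and> Q (insert x T)}"
    using S by (metis (mono_tags, lifting) image_eqI mem_Collect_eq)
next
  fix S assume "S \<in> insert x ` {T. T \<subseteq> {y\<in>D. x < y} \<and> card T = m - 1 \<and> Q (insert x T)}"
  then obtain T where T: "T \<subseteq> {y\<in>D. x < y}" "card T = m - 1" "Q (insert x T)" and S: "S = insert x T"
    by auto
  have fT: "finite T" using T(1) assms(1) finite_subset by (metis (no_types, lifting) mem_Collect_eq subsetI subset_iff finite_Collect_conjI)
  have xT: "x \<notin> T" using T(1) by auto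
  have "card S = m" using S fT xT T(2) assms(3) by simp
  moreover have "Min S = x" using S fT T(1) by (auto intro!: Min_eqI)
  moreover have "S \<subseteq> D" using S T(1) assms(2) by auto
  ultimately show "S \<in> {S. S \<subseteq> D \<and> card S = m \<and> Min S = x \<and> Q S}" using T(3) S by auto
qed


lemma card_decomp:
  fixes D :: "real set" and F :: "real set \<Rightarrow> real"
  assumes "finite D" "1 \<le> m" "\<And>S. S \<subseteq> D \<Longrightarrow> S \<noteq> {} \<Longrightarrow> F S \<in> S"
  shows "card {S. S \<subseteq> D \<and> card S = m \<and> Q S} =
     (\<Sum>x\<in>D. card {S. S \<subseteq> D \<and> card S = m \<and> F S = x \<and> Q S})"
proof -
  have "{S. S \<subseteq> D \<and> card S = m \<and> Q S} = (\<Union>x\<in>D. {S. S \<subseteq> D \<and> card S = m \<and> F S = x \<and> Q S})"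
  proof (rule set_eqI, rule iffI)
    fix S assume S: "S \<in> {S. S \<subseteq> D \<and> card S = m \<and> Q S}"
    hence "S \<noteq> {}" using assms(2) by auto
    hence "F S \<in> D" using S assms(3) by auto
    thus "S \<in> (\<Union>x\<in>D. {S. S \<subseteq> D \<and> card S = m \<and> F S = x \<and> Q S})" using S by auto
  qed auto
  moreover have "card (\<Union>x\<in>D. {S. S \<subseteq> D \<and> card S = m \<and> F S = x \<and> Q S}) =
     (\<Sum>x\<in>D. card {S. S \<subseteq> D \<and> card S = m \<and> F S = x \<and> Q S})"
    by (rule card_UN_disjoint) (use assms(1) in auto)
  ultimately show ?thesis by simp
qed

lemma card_insert_image:
  assumes "\<And>T. T \<in> A \<Longrightarrow> x \<notin> T"
  shows "card (insert x ` A) = card A"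
proof -
  have "inj_on (insert x) A"
    unfolding inj_on_def using assms by (metis Diff_insert_absorb)
  thus ?thesis by (rule card_image)
qed

lemma LB_part:
  fixes D :: "real set" and a b c :: real and m :: nat
  assumes fD: "finite D" and Dab: "D \<subseteq> {a..b}" and c: "0 < c" "c < 1"
    and LB: "valid_LB LB" and m: "2 \<le> m" "m \<le> card D"
  shows "measure_pmf.prob (sample_wor D m) {S. LB (S - {Max S}) a (Max S) c > AVG D} < c"
proof -
  define V where "V x = {T. T \<subseteq> {y\<in>D. y < x} \<and> card T = m - 1}" for x
  define W where "W x = {T. T \<subseteq> {y\<in>D. y < x} \<and> card T = m - 1 \<and> LB T a x c > AVG D}" for x
  have m1: "1 \<le> m" using m by simp
  have MaxIn: "\<And>S. S \<subseteq> D \<Longrightarrow> S \<noteq> {} \<Longrightarrow> Max S \<in> S"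
    using fD by (meson Max_in finite_subset)
  have fibW: "card {S. S \<subseteq> D \<and> card S = m \<and> Max S = x \<and> LB (S - {Max S}) a (Max S) c > AVG D} = card (W x)"
    if x: "x \<in> D" for x
  proof -
    have "{S. S \<subseteq> D \<and> card S = m \<and> Max S = x \<and> LB (S - {Max S}) a (Max S) c > AVG D}
       = {S. S \<subseteq> D \<and> card S = m \<and> Max S = x \<and> LB (S - {x}) a x c > AVG D}" by auto
    also have "\<dots> = insert x ` {T. T \<subseteq> {y\<in>D. y < x} \<and> card T = m - 1 \<and> LB (insert x T - {x}) a x c > AVG D}"
      by (rule fiber_max[OF fD x m1])
    also have "{T. T \<subseteq> {y\<in>D. y < x} \<and> card T = m - 1 \<and> LB (insert x T - {x}) a x c > AVG D} = W x"
      unfolding W_def by (rule Collect_cong) (metis (no_types, lifting) Diff_insert_absorb less_irrefl mem_Collect_eq subsetD)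
    finally have eq: "{S. S \<subseteq> D \<and> card S = m \<and> Max S = x \<and> LB (S - {Max S}) a (Max S) c > AVG D} = insert x ` W x" .
    have "\<And>T. T \<in> W x \<Longrightarrow> x \<notin> T" unfolding W_def by blast
    thus ?thesis unfolding eq by (rule card_insert_image)
  qed
  have fibV: "card {S. S \<subseteq> D \<and> card S = m \<and> Max S = x \<and> True} = card (V x)"
    if x: "x \<in> D" for x
  proof -
    have "{S. S \<subseteq> D \<and> card S = m \<and> Max S = x \<and> True} = insert x ` V x"
      unfolding V_def using fiber_max[OF fD x m1, of "\<lambda>_. True"] by simp
    moreover have "\<And>T. T \<in> V x \<Longrightarrow> x \<notin> T" unfolding V_def by blast
    ultimately show ?thesis using card_insert_image by metis
  qed
  have cE: "card {S. S \<subseteq> D \<and> card S = m \<and> LB (S - {Max S}) a (Max S) c > AVG D} = (\<Sum>x\<in>D. card (W x))"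
  proof -
    have "card {S. S \<subseteq> D \<and> card S = m \<and> LB (S - {Max S}) a (Max S) c > AVG D}
      = (\<Sum>x\<in>D. card {S. S \<subseteq> D \<and> card S = m \<and> Max S = x \<and> LB (S - {Max S}) a (Max S) c > AVG D})"
      by (rule card_decomp[OF fD m1, of Max "\<lambda>S. LB (S - {Max S}) a (Max S) c > AVG D"]) (rule MaxIn)
    also have "\<dots> = (\<Sum>x\<in>D. card (W x))" by (rule sum.cong[OF refl]) (rule fibW)
    finally show ?thesis .
  qed
  have cU: "card {S. S \<subseteq> D \<and> card S = m} = (\<Sum>x\<in>D. card (V x))"
  proof -
    have "card {S. S \<subseteq> D \<and> card S = m \<and> True}
      = (\<Sum>x\<in>D. card {S. S \<subseteq> D \<and> card S = m \<and> Max S = x \<and> True})"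
      by (rule card_decomp[OF fD m1, of Max "\<lambda>S. True"]) (rule MaxIn)
    also have "\<dots> = (\<Sum>x\<in>D. card (V x))" by (rule sum.cong[OF refl]) (rule fibV)
    finally show ?thesis by simp
  qed
  have Upos: "card {S. S \<subseteq> D \<and> card S = m} > 0"
  proof -
    have "finite {S. S \<subseteq> D \<and> card S = m}" using fD by auto
    moreover have "{S. S \<subseteq> D \<and> card S = m} \<noteq> {}" using obtain_subset_with_card_n[OF m(2)] by blast
    ultimately show ?thesis by (simp add: card_gt_0_iff)
  qed
  have pw: "real (card (W x)) \<le> c * real (card (V x)) \<and> (V x \<noteq> {} \<longrightarrow> real (card (W x)) < c * real (card (V x)))"
    if x: "x \<in> D" for x
  proof (cases "V x = {}")
    case True
    hence "W x = {}" unfolding V_def W_def by auto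
    thus ?thesis using True by simp
  next
    case False
    define A where "A = {y\<in>D. y < x}"
    have fA: "finite A" using fD by (simp add: A_def)
    obtain T where T: "T \<subseteq> A" "card T = m - 1" using False unfolding V_def A_def by auto
    have k: "m - 1 \<le> card A" using T card_mono[OF fA T(1)] by simp
    have Ane: "A \<noteq> {}" using T m by auto
    have Aab: "A \<subseteq> {a..x}" using Dab by (auto simp: A_def)
    have "measure_pmf.prob (sample_wor A (m - 1)) {T. LB T a x c > AVG A} < c"
      using LB fA Aab k m c unfolding valid_LB_def by auto
    hence "real (card {T. T \<subseteq> A \<and> card T = m - 1 \<and> T \<in> {T. LB T a x c > AVG A}}) / real (card (V x)) < c"
      using prob_sample_wor[OF fA k] by (simp add: V_def A_def)
    hence lt: "real (card {T. T \<subseteq> A \<and> card T = m - 1 \<and> LB T a x c > AVG A}) < c * real (card (V x))"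
      using False fA by (simp add: V_def A_def[symmetric] divide_less_eq card_gt_0_iff)
    have avg: "AVG A \<le> AVG D" using avg_lower[OF fD] Ane by (simp add: A_def)
    have sub: "W x \<subseteq> {T. T \<subseteq> A \<and> card T = m - 1 \<and> LB T a x c > AVG A}"
      unfolding W_def A_def using avg A_def by auto
    have "card (W x) \<le> card {T. T \<subseteq> A \<and> card T = m - 1 \<and> LB T a x c > AVG A}"
      by (rule card_mono[OF _ sub]) (use fA in auto)
    thus ?thesis using lt False by linarith
  qed
  obtain x0 where x0: "x0 \<in> D" "V x0 \<noteq> {}"
  proof -
    have "(\<Sum>x\<in>D. card (V x)) \<noteq> 0" using cU Upos by simp
    then obtain x where "x \<in> D" "card (V x) \<noteq> 0" by (rule sum.not_neutral_contains_not_neutral)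
    thus ?thesis using that by (metis card.empty)
  qed
  have "(\<Sum>x\<in>D. real (card (W x))) < (\<Sum>x\<in>D. c * real (card (V x)))"
  proof (rule sum_strict_mono_ex1[OF fD])
    show "\<forall>x\<in>D. real (card (W x)) \<le> c * real (card (V x))" using pw by blast
    show "\<exists>x\<in>D. real (card (W x)) < c * real (card (V x))" using pw x0 by blast
  qed
  hence "real (card {S. S \<subseteq> D \<and> card S = m \<and> LB (S - {Max S}) a (Max S) c > AVG D})
       < c * real (card {S. S \<subseteq> D \<and> card S = m})"
    by (simp add: cE cU sum_distrib_left)
  thus ?thesis using prob_sample_wor[OF fD m(2)] Upos by (simp add: divide_less_eq)
qed

lemma RB_part:
  fixes D :: "real set" and a b c :: real and m :: nat
  assumes fD: "finite D" and Dab: "D \<subseteq> {a..b}" and c: "0 < c" "c < 1"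
    and RB: "valid_RB RB" and m: "2 \<le> m" "m \<le> card D"
  shows "measure_pmf.prob (sample_wor D m) {S. RB (S - {Min S}) (Min S) b c < AVG D} < c"
proof -
  define V where "V x = {T. T \<subseteq> {y\<in>D. x < y} \<and> card T = m - 1}" for x
  define W where "W x = {T. T \<subseteq> {y\<in>D. x < y} \<and> card T = m - 1 \<and> RB T x b c < AVG D}" for x
  have m1: "1 \<le> m" using m by simp
  have MinIn: "\<And>S. S \<subseteq> D \<Longrightarrow> S \<noteq> {} \<Longrightarrow> Min S \<in> S"
    using fD by (meson Min_in finite_subset)
  have fibW: "card {S. S \<subseteq> D \<and> card S = m \<and> Min S = x \<and> RB (S - {Min S}) (Min S) b c < AVG D} = card (W x)"
    if x: "x \<in> D" for x
  proof -
    have "{S. S \<subseteq> D \<and> card S = m \<and> Min S = x \<and> RB (S - {Min S}) (Min S) b c < AVG D}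
       = {S. S \<subseteq> D \<and> card S = m \<and> Min S = x \<and> RB (S - {x}) x b c < AVG D}" by auto
    also have "\<dots> = insert x ` {T. T \<subseteq> {y\<in>D. x < y} \<and> card T = m - 1 \<and> RB (insert x T - {x}) x b c < AVG D}"
      by (rule fiber_min[OF fD x m1])
    also have "{T. T \<subseteq> {y\<in>D. x < y} \<and> card T = m - 1 \<and> RB (insert x T - {x}) x b c < AVG D} = W x"
      unfolding W_def by (rule Collect_cong) (metis (no_types, lifting) Diff_insert_absorb less_irrefl mem_Collect_eq subsetD)
    finally have eq: "{S. S \<subseteq> D \<and> card S = m \<and> Min S = x \<and> RB (S - {Min S}) (Min S) b c < AVG D} = insert x ` W x" .
    have "\<And>T. T \<in> W x \<Longrightarrow> x \<notin> T" unfolding W_def by blast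
    thus ?thesis unfolding eq by (rule card_insert_image)
  qed
  have fibV: "card {S. S \<subseteq> D \<and> card S = m \<and> Min S = x \<and> True} = card (V x)"
    if x: "x \<in> D" for x
  proof -
    have "{S. S \<subseteq> D \<and> card S = m \<and> Min S = x \<and> True} = insert x ` V x"
      unfolding V_def using fiber_min[OF fD x m1, of "\<lambda>_. True"] by simp
    moreover have "\<And>T. T \<in> V x \<Longrightarrow> x \<notin> T" unfolding V_def by blast
    ultimately show ?thesis using card_insert_image by metis
  qed
  have cE: "card {S. S \<subseteq> D \<and> card S = m \<and> RB (S - {Min S}) (Min S) b c < AVG D} = (\<Sum>x\<in>D. card (W x))"
  proof -
    have "card {S. S \<subseteq> D \<and> card S = m \<and> RB (S - {Min S}) (Min S) b c < AVG D}
      = (\<Sum>x\<in>D. card {S. S \<subseteq> D \<and> card S = m \<and> Min S = x \<and> RB (S - {Min S}) (Min S) b c < AVG D})"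
      by (rule card_decomp[OF fD m1, of Min "\<lambda>S. RB (S - {Min S}) (Min S) b c < AVG D"]) (rule MinIn)
    also have "\<dots> = (\<Sum>x\<in>D. card (W x))" by (rule sum.cong[OF refl]) (rule fibW)
    finally show ?thesis .
  qed
  have cU: "card {S. S \<subseteq> D \<and> card S = m} = (\<Sum>x\<in>D. card (V x))"
  proof -
    have "card {S. S \<subseteq> D \<and> card S = m \<and> True}
      = (\<Sum>x\<in>D. card {S. S \<subseteq> D \<and> card S = m \<and> Min S = x \<and> True})"
      by (rule card_decomp[OF fD m1, of Min "\<lambda>S. True"]) (rule MinIn)
    also have "\<dots> = (\<Sum>x\<in>D. card (V x))" by (rule sum.cong[OF refl]) (rule fibV)
    finally show ?thesis by simp
  qed
  have Upos: "card {S. S \<subseteq> D \<and> card S = m} > 0"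
  proof -
    have "finite {S. S \<subseteq> D \<and> card S = m}" using fD by auto
    moreover have "{S. S \<subseteq> D \<and> card S = m} \<noteq> {}" using obtain_subset_with_card_n[OF m(2)] by blast
    ultimately show ?thesis by (simp add: card_gt_0_iff)
  qed
  have pw: "real (card (W x)) \<le> c * real (card (V x)) \<and> (V x \<noteq> {} \<longrightarrow> real (card (W x)) < c * real (card (V x)))"
    if x: "x \<in> D" for x
  proof (cases "V x = {}")
    case True
    hence "W x = {}" unfolding V_def W_def by auto
    thus ?thesis using True by simp
  next
    case False
    define A where "A = {y\<in>D. x < y}"
    have fA: "finite A" using fD by (simp add: A_def)
    obtain T where T: "T \<subseteq> A" "card T = m - 1" using False unfolding V_def A_def by auto
    have k: "m - 1 \<le> card A" using T card_mono[OF fA T(1)] by simp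
    have Ane: "A \<noteq> {}" using T m by auto
    have Aab: "A \<subseteq> {x..b}" using Dab by (auto simp: A_def)
    have "measure_pmf.prob (sample_wor A (m - 1)) {T. RB T x b c < AVG A} < c"
      using RB fA Aab k m c unfolding valid_RB_def by auto
    hence "real (card {T. T \<subseteq> A \<and> card T = m - 1 \<and> T \<in> {T. RB T x b c < AVG A}}) / real (card (V x)) < c"
      using prob_sample_wor[OF fA k] by (simp add: V_def A_def)
    hence lt: "real (card {T. T \<subseteq> A \<and> card T = m - 1 \<and> RB T x b c < AVG A}) < c * real (card (V x))"
      using False fA by (simp add: V_def A_def[symmetric] divide_less_eq card_gt_0_iff)
    have avg: "AVG D \<le> AVG A" using avg_upper[OF fD] Ane by (simp add: A_def)
    have sub: "W x \<subseteq> {T. T \<subseteq> A \<and> card T = m - 1 \<and> RB T x b c < AVG A}"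
      unfolding W_def A_def using avg A_def by auto
    have "card (W x) \<le> card {T. T \<subseteq> A \<and> card T = m - 1 \<and> RB T x b c < AVG A}"
      by (rule card_mono[OF _ sub]) (use fA in auto)
    thus ?thesis using lt False by linarith
  qed
  obtain x0 where x0: "x0 \<in> D" "V x0 \<noteq> {}"
  proof -
    have "(\<Sum>x\<in>D. card (V x)) \<noteq> 0" using cU Upos by simp
    then obtain x where "x \<in> D" "card (V x) \<noteq> 0" by (rule sum.not_neutral_contains_not_neutral)
    thus ?thesis using that by (metis card.empty)
  qed
  have "(\<Sum>x\<in>D. real (card (W x))) < (\<Sum>x\<in>D. c * real (card (V x)))"
  proof (rule sum_strict_mono_ex1[OF fD])
    show "\<forall>x\<in>D. real (card (W x)) \<le> c * real (card (V x))" using pw by blast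
    show "\<exists>x\<in>D. real (card (W x)) < c * real (card (V x))" using pw x0 by blast
  qed
  hence "real (card {S. S \<subseteq> D \<and> card S = m \<and> RB (S - {Min S}) (Min S) b c < AVG D})
       < c * real (card {S. S \<subseteq> D \<and> card S = m})"
    by (simp add: cE cU sum_distrib_left)
  thus ?thesis using prob_sample_wor[OF fD m(2)] Upos by (simp add: divide_less_eq)
qed


theorem mainTheorem3:
  fixes D :: "real set" and a b \<delta> :: real and m :: nat
    and LB RB :: "real set \<Rightarrow> real \<Rightarrow> real \<Rightarrow> real \<Rightarrow> real"
  assumes "finite D" and "card D \<ge> 2" and "D \<subseteq> {a..b}"
    and "0 < \<delta>" and "\<delta> < 1"
    and "valid_LB LB" and "valid_RB RB"
    and "2 \<le> m" and "m \<le> card D"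
  shows "measure_pmf.prob (sample_wor D m)
           {S. AVG D \<notin> {LB (S - {Max S}) a (Max S) (\<delta>/2) .. RB (S - {Min S}) (Min S) b (\<delta>/2)}}
         < \<delta>"
proof -
  have c: "0 < \<delta>/2" "\<delta>/2 < 1" using assms by auto
  let ?P = "measure_pmf.prob (sample_wor D m)"
  let ?L = "{S. LB (S - {Max S}) a (Max S) (\<delta>/2) > AVG D}"
  let ?R = "{S. RB (S - {Min S}) (Min S) b (\<delta>/2) < AVG D}"
  have sub: "{S. AVG D \<notin> {LB (S - {Max S}) a (Max S) (\<delta>/2) .. RB (S - {Min S}) (Min S) b (\<delta>/2)}} \<subseteq> ?L \<union> ?R"
    by auto
  have "?P {S. AVG D \<notin> {LB (S - {Max S}) a (Max S) (\<delta>/2) .. RB (S - {Min S}) (Min S) b (\<delta>/2)}} \<le> ?P (?L \<union> ?R)"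
    by (rule measure_pmf.finite_measure_mono[OF sub]) simp
  also have "\<dots> \<le> ?P ?L + ?P ?R"
    by (rule measure_Un_le) simp_all
  also have "\<dots> < \<delta>/2 + \<delta>/2"
    using LB_part[OF assms(1) assms(3) c assms(6) assms(8) assms(9)]
          RB_part[OF assms(1) assms(3) c assms(7) assms(8) assms(9)] by linarith
  finally show ?thesis by simp
qed

end
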